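(* Let $n\ge3$, $k\ge0$, let $S\subseteq\mathrm{Inc}(A,B)$ be an independent set in $G_n^k$, and let $i\in[n+k]$. Then (1) $\mathrm{DFCL}(i,S)$ is a subset of $\mathrm{Inc}(A,B)$ that is independent in $G_n^k$; (2) $\mathrm{DLCF}(i,S)$ is a subset of $\mathrm{Inc}(A,B)$ that is independent in $G_n^k$; (3) $|\mathrm{DFCL}(i,S)|+|\mathrm{DLCF}(i,S)|=2|S|$.
   Context: For integers $n\ge3$, $k\ge0$, the crown $S_n^k$ is the poset with ground set $A\cup B$, $A=\{a_1,\dots,a_{n+k}\}$, $B=\{b_1,\dots,b_{n+k}\}$, indices cyclic modulo $n+k$; elements of $A$ are pairwise incomparable, as are elements of $B$, and $a_i$ is incomparable to $b_j$ when $j\in\{i,\dots,i+k\}$ (mod $n+k$), while $a_i<b_j$ otherwise. $\mathrm{Inc}(A,B)$ is the set of pairs $(a,b)\in A\times B$ with $a$ incomparable to $b$; $G_n^k$ has vertex set $\mathrm{Inc}(A,B)$ with $(a,b)$ adjacent to $(x,y)$ iff $a<y$ and $x<b$. For an independent $S$ and $i\in[n+k]$, an ordered pair $((a,b),(x,y))$ of elements of $S$ is a contraction blocking pair at $i$ if $a=a_i$, $y=b_i$, and $x<b$ in $S_n^k$. $\mathrm{FCBP}(i,S)$ is the set of $(a,b)\in S$ for which some $(x,y)\in S$ makes $((a,b),(x,y))$ a contraction blocking pair at $i$; $\mathrm{LCBP}(i,S)$ is the set of $(x,y)\in S$ for which some $(a,b)\in S$ makes $((a,b),(x,y))$ a contraction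 blocking pair at $i$. Define $\mathrm{DFCL}(i,S)=(S-\mathrm{FCBP}(i,S))\cup\{(x,b_{i-1}):(x,y)\in\mathrm{LCBP}(i,S)\}$ and $\mathrm{DLCF}(i,S)=(S-\mathrm{LCBP}(i,S))\cup\{(a_{i+1},b):(a,b)\in\mathrm{FCBP}(i,S)\}$. *)

theory Defs
  imports Main
begin

text \<open>Crown S_n^k with N = n + k; indices are 0-based, taken in {0..<N}, cyclic mod N.
  A i stands for a_i, B j for b_j.\<close>

datatype elem = A nat | B nat

text \<open>a_i is incomparable to b_j iff j is in {i, ..., i+k} mod N, i.e. (j - i) mod N \<le> k.\<close>
definition cyc_dist :: "nat \<Rightarrow> nat \<Rightarrow> nat \<Rightarrow> nat" where
  "cyc_dist N i j = (j + N - i) mod N"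

fun crown_less :: "nat \<Rightarrow> nat \<Rightarrow> elem \<Rightarrow> elem \<Rightarrow> bool" where
  "crown_less N k (A i) (B j) = (i < N \<and> j < N \<and> \<not> cyc_dist N i j \<le> k)"
| "crown_less N k _ _ = False"

definition crown_ground :: "nat \<Rightarrow> elem set" where
  "crown_ground N = A ` {..<N} \<union> B ` {..<N}"

definition incomp :: "nat \<Rightarrow> nat \<Rightarrow> elem \<Rightarrow> elem \<Rightarrow> bool" where
  "incomp N k u v = (u \<in> crown_ground N \<and> v \<in> crown_ground N \<and> u \<noteq> v
     \<and> \<not> crown_less N k u v \<and> \<not> crown_less N k v u)"

definition Inc :: "nat \<Rightarrow> nat \<Rightarrow> (elem \<times> elem) set" where
  "Inc N k = {(a, b). a \<in> A ` {..<N} \<and> b \<in> B ` {..<N} \<and> incomp N k a b}"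

definition G_adj :: "nat \<Rightarrow> nat \<Rightarrow> elem \<times> elem \<Rightarrow> elem \<times> elem \<Rightarrow> bool" where
  "G_adj N k u v = (u \<in> Inc N k \<and> v \<in> Inc N k \<and>
     crown_less N k (fst u) (snd v) \<and> crown_less N k (fst v) (snd u))"

definition independent :: "nat \<Rightarrow> nat \<Rightarrow> (elem \<times> elem) set \<Rightarrow> bool" where
  "independent N k S = (S \<subseteq> Inc N k \<and> (\<forall>u\<in>S. \<forall>v\<in>S. \<not> G_adj N k u v))"

definition is_cbp :: "nat \<Rightarrow> nat \<Rightarrow> nat \<Rightarrow> (elem \<times> elem) set \<Rightarrow> elem \<times> elem \<Rightarrow> elem \<times> elem \<Rightarrow> bool" where
  "is_cbp N k i S u v = (u \<in> S \<and> v \<in> S \<and> fst u = A i \<and> snd v = B i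
     \<and> crown_less N k (fst v) (snd u))"

definition FCBP :: "nat \<Rightarrow> nat \<Rightarrow> nat \<Rightarrow> (elem \<times> elem) set \<Rightarrow> (elem \<times> elem) set" where
  "FCBP N k i S = {u \<in> S. \<exists>v\<in>S. is_cbp N k i S u v}"

definition LCBP :: "nat \<Rightarrow> nat \<Rightarrow> nat \<Rightarrow> (elem \<times> elem) set \<Rightarrow> (elem \<times> elem) set" where
  "LCBP N k i S = {v \<in> S. \<exists>u\<in>S. is_cbp N k i S u v}"

definition DFCL :: "nat \<Rightarrow> nat \<Rightarrow> nat \<Rightarrow> (elem \<times> elem) set \<Rightarrow> (elem \<times> elem) set" where
  "DFCL N k i S = (S - FCBP N k i S) \<union> {(fst v, B ((i + N - 1) mod N)) | v. v \<in> LCBP N k i S}"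

definition DLCF :: "nat \<Rightarrow> nat \<Rightarrow> nat \<Rightarrow> (elem \<times> elem) set \<Rightarrow> (elem \<times> elem) set" where
  "DLCF N k i S = (S - LCBP N k i S) \<union> {(A ((i + 1) mod N), snd u) | u. u \<in> FCBP N k i S}"

end

theory Submission imports Defs begin

lemma cd: assumes "i<(N::nat)" "j<N" shows "cyc_dist N i j = (if i \<le> j then j - i else j + N - i)"
proof (cases "i \<le> j")
  case True
  then have e: "j + N - i = (j - i) + N" using assms by linarith
  have "((j - i) + N) mod N = j - i" using assms by simp
  then show ?thesis using True unfolding cyc_dist_def e by simp
next
  case False
  then show ?thesis using assms by (simp add: cyc_dist_def)
qed

lemma pr: assumes "i<(N::nat)" shows "(i+N-1) mod N = (if i=0 then N-1 else i-1)"
proof (cases "i=0")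
  case False
  then have e: "i+N-1 = (i-1)+N" using assms by linarith
  have "((i-1)+N) mod N = i - 1" using assms by simp
  then show ?thesis using False unfolding e by simp
qed (use assms in simp)

lemma su: assumes "i<(N::nat)" shows "(i+1) mod N = (if i+1=N then 0 else i+1)"
  using assms by (auto simp: mod_less)

context
  fixes N k i :: nat
  assumes kN: "k+3 \<le> N" and iN: "i < N"
begin

lemma F1: "x<N \<Longrightarrow> cyc_dist N x i \<le> k \<Longrightarrow> x \<noteq> i \<Longrightarrow> cyc_dist N x ((i+N-1) mod N) \<le> k"
  using kN iN unfolding pr[OF iN] by (cases "i=0") (auto simp: cd split: if_splits)
lemma F2: "a<N \<Longrightarrow> cyc_dist N a i \<le> k \<Longrightarrow> k < cyc_dist N a ((i+N-1) mod N) \<Longrightarrow> a = i"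
  using kN iN unfolding pr[OF iN] by (cases "i=0") (auto simp: cd split: if_splits)
lemma F3: "k < cyc_dist N i ((i+N-1) mod N)"
  using kN iN unfolding pr[OF iN] by (cases "i=0") (auto simp: cd)
lemma F4: "b<N \<Longrightarrow> cyc_dist N i b \<le> k \<Longrightarrow> b \<noteq> i \<Longrightarrow> cyc_dist N ((i+1) mod N) b \<le> k"
  using kN iN unfolding su[OF iN] by (cases "i+1=N") (auto simp: cd)
lemma F5: "b<N \<Longrightarrow> cyc_dist N i b \<le> k \<Longrightarrow> k < cyc_dist N ((i+1) mod N) b \<Longrightarrow> b = i"
  using kN iN unfolding su[OF iN] by (cases "i+1=N") (auto simp: cd split: if_splits)
lemma F6: "k < cyc_dist N ((i+1) mod N) i"
  using kN iN unfolding su[OF iN] by (cases "i+1=N") (auto simp: cd)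
end

lemma Inc_iff: "u \<in> Inc N k \<longleftrightarrow> (\<exists>a b. u = (A a, B b) \<and> a<N \<and> b<N \<and> cyc_dist N a b \<le> k)"
  unfolding Inc_def incomp_def crown_ground_def by auto

lemma adj_iff: "(A a, B b) \<in> Inc N k \<Longrightarrow> (A x, B y) \<in> Inc N k \<Longrightarrow>
   G_adj N k (A a, B b) (A x, B y) \<longleftrightarrow> (k < cyc_dist N a y \<and> k < cyc_dist N x b)"
  unfolding G_adj_def by (auto simp: Inc_iff)

lemma indep_iff: "independent N k T \<longleftrightarrow> T \<subseteq> Inc N k \<and>
   (\<forall>a b x y. (A a, B b) \<in> T \<longrightarrow> (A x, B y) \<in> T \<longrightarrow> \<not> (k < cyc_dist N a y \<and> k < cyc_dist N x b))"
proof
  assume h: "independent N k T"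
  then have sub: "T \<subseteq> Inc N k" unfolding independent_def by blast
  show "T \<subseteq> Inc N k \<and>
   (\<forall>a b x y. (A a, B b) \<in> T \<longrightarrow> (A x, B y) \<in> T \<longrightarrow> \<not> (k < cyc_dist N a y \<and> k < cyc_dist N x b))"
  proof (intro conjI sub allI impI notI)
    fix a b x y assume m: "(A a, B b) \<in> T" "(A x, B y) \<in> T" and c: "k < cyc_dist N a y \<and> k < cyc_dist N x b"
    have "G_adj N k (A a, B b) (A x, B y)" using m sub c adj_iff by blast
    with h m show False unfolding independent_def by blast
  qed
next
  assume h: "T \<subseteq> Inc N k \<and>
   (\<forall>a b x y. (A a, B b) \<in> T \<longrightarrow> (A x, B y) \<in> T \<longrightarrow> \<not> (k < cyc_dist N a y \<and> k < cyc_dist N x b))"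
  show "independent N k T" unfolding independent_def
  proof (intro conjI ballI)
    show "T \<subseteq> Inc N k" using h by blast
    fix u v assume u: "u \<in> T" and v: "v \<in> T"
    have "u \<in> Inc N k" "v \<in> Inc N k" using u v h by blast+
    then obtain a b x y where ua: "u = (A a, B b)" and vx: "v = (A x, B y)" unfolding Inc_iff by blast
    show "\<not> G_adj N k u v" using h u v unfolding ua vx by (subst adj_iff) auto
  qed
qed

theorem lemma4p7:
  fixes n k i :: nat and S :: "(elem \<times> elem) set"
  assumes "n \<ge> 3"
    and "S \<subseteq> Inc (n + k) k"
    and "independent (n + k) k S"
    and "i < n + k"
  shows "(DFCL (n + k) k i S \<subseteq> Inc (n + k) k \<and> independent (n + k) k (DFCL (n + k) k i S))
     \<and> (DLCF (n + k) k i S \<subseteq> Inc (n + k) k \<and> independent (n + k) k (DLCF (n + k) k i S))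
     \<and> card (DFCL (n + k) k i S) + card (DLCF (n + k) k i S) = 2 * card S"
proof -
  define N where "N = n + k"
  define p where "p = (i+N-1) mod N"
  define s where "s = (i+1) mod N"
  define F where "F = FCBP N k i S"
  define L where "L = LCBP N k i S"
  have kN: "k+3 \<le> N" using assms(1) unfolding N_def by simp
  have iN: "i < N" using assms(4) unfolding N_def by simp
  have SI: "S \<subseteq> Inc N k" using assms(2) unfolding N_def .
  have ind: "\<And>a b x y. (A a, B b) \<in> S \<Longrightarrow> (A x, B y) \<in> S \<Longrightarrow> \<not> (k < cyc_dist N a y \<and> k < cyc_dist N x b)"
    using assms(3) unfolding N_def indep_iff by blast
  have inS: "\<And>u. u \<in> S \<Longrightarrow> \<exists>a b. u = (A a, B b) \<and> a<N \<and> b<N \<and> cyc_dist N a b \<le> k"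
    using SI by (auto simp: Inc_iff)
  have Fc: "\<And>u. u \<in> F \<longleftrightarrow> (\<exists>b. u = (A i, B b) \<and> u \<in> S \<and> (\<exists>x. (A x, B i) \<in> S \<and> k < cyc_dist N x b))"
  proof
    fix u assume "u \<in> F"
    then obtain v where u: "u \<in> S" and v: "v \<in> S" and c: "fst u = A i" "snd v = B i" "crown_less N k (fst v) (snd u)"
      unfolding F_def FCBP_def is_cbp_def by blast
    obtain a b where ua: "u = (A a, B b)" using inS[OF u] by blast
    obtain x y where vx: "v = (A x, B y)" using inS[OF v] by blast
    show "\<exists>b. u = (A i, B b) \<and> u \<in> S \<and> (\<exists>x. (A x, B i) \<in> S \<and> k < cyc_dist N x b)"
      using u v c unfolding ua vx by auto
  next
    fix u assume "\<exists>b. u = (A i, B b) \<and> u \<in> S \<and> (\<exists>x. (A x, B i) \<in> S \<and> k < cyc_dist N x b)"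
    then obtain b x where u: "u = (A i, B b)" "u \<in> S" and v: "(A x, B i) \<in> S" and c: "k < cyc_dist N x b" by blast
    have "x < N" "b < N" using inS[OF v] inS[OF u(2)] u(1) by auto
    then show "u \<in> F" unfolding F_def FCBP_def is_cbp_def using u v c by force
  qed
  have Lc: "\<And>v. v \<in> L \<longleftrightarrow> (\<exists>x. v = (A x, B i) \<and> v \<in> S \<and> (\<exists>b. (A i, B b) \<in> S \<and> k < cyc_dist N x b))"
  proof
    fix v assume "v \<in> L"
    then obtain u where u: "u \<in> S" and v: "v \<in> S" and c: "fst u = A i" "snd v = B i" "crown_less N k (fst v) (snd u)"
      unfolding L_def LCBP_def is_cbp_def by blast
    obtain a b where ua: "u = (A a, B b)" using inS[OF u] by blast
    obtain x y where vx: "v = (A x, B y)" using inS[OF v] by blast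
    show "\<exists>x. v = (A x, B i) \<and> v \<in> S \<and> (\<exists>b. (A i, B b) \<in> S \<and> k < cyc_dist N x b)"
      using u v c unfolding ua vx by auto
  next
    fix v assume "\<exists>x. v = (A x, B i) \<and> v \<in> S \<and> (\<exists>b. (A i, B b) \<in> S \<and> k < cyc_dist N x b)"
    then obtain b x where v: "v = (A x, B i)" "v \<in> S" and u: "(A i, B b) \<in> S" and c: "k < cyc_dist N x b" by blast
    have "x < N" "b < N" using inS[OF v(2)] inS[OF u] v(1) by auto
    then show "v \<in> L" unfolding L_def LCBP_def is_cbp_def using u v c by force
  qed
  have FS: "F \<subseteq> S" and LS: "L \<subseteq> S" using Fc Lc by blast+
  have nL: "\<And>x. (A x, B i) \<in> L \<Longrightarrow> x \<noteq> i \<and> x < N \<and> cyc_dist N x p \<le> k"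
  proof -
    fix x assume h: "(A x, B i) \<in> L"
    then obtain b where b: "(A i, B b) \<in> S" "k < cyc_dist N x b" and xS: "(A x, B i) \<in> S" using Lc by blast
    have xN: "x < N" "cyc_dist N x i \<le> k" using inS[OF xS] by auto
    have "cyc_dist N i b \<le> k" using inS[OF b(1)] by auto
    then have "x \<noteq> i" using b(2) by auto
    then show "x \<noteq> i \<and> x < N \<and> cyc_dist N x p \<le> k" using F1[OF kN iN] xN unfolding p_def by blast
  qed
  have nF: "\<And>b. (A i, B b) \<in> F \<Longrightarrow> b \<noteq> i \<and> b < N \<and> cyc_dist N s b \<le> k"
  proof -
    fix b assume h: "(A i, B b) \<in> F"
    then obtain x where x: "(A x, B i) \<in> S" "k < cyc_dist N x b" and bS: "(A i, B b) \<in> S" using Fc by blast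
    have bN: "b < N" "cyc_dist N i b \<le> k" using inS[OF bS] by auto
    have "cyc_dist N x i \<le> k" using inS[OF x(1)] by auto
    then have "b \<noteq> i" using x(2) by auto
    then show "b \<noteq> i \<and> b < N \<and> cyc_dist N s b \<le> k" using F4[OF kN iN] bN unfolding s_def by blast
  qed
  have D1: "DFCL N k i S = (S - F) \<union> (\<lambda>v. (fst v, B p)) ` L"
    unfolding DFCL_def F_def L_def p_def Setcompr_eq_image[where f="\<lambda>v. (fst v, B ((i + N - 1) mod N))"] ..
  have D2: "DLCF N k i S = (S - L) \<union> (\<lambda>u. (A s, snd u)) ` F"
    unfolding DLCF_def F_def L_def s_def Setcompr_eq_image[where f="\<lambda>u. (A ((i + 1) mod N), snd u)"] ..
  have m1: "\<And>w. w \<in> DFCL N k i S \<Longrightarrow> (w \<in> S \<and> w \<notin> F) \<or> (\<exists>x. w = (A x, B p) \<and> (A x, B i) \<in> L)"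
    unfolding D1 using Lc by fastforce
  have m2: "\<And>w. w \<in> DLCF N k i S \<Longrightarrow> (w \<in> S \<and> w \<notin> L) \<or> (\<exists>b. w = (A s, B b) \<and> (A i, B b) \<in> F)"
    unfolding D2 using Fc by fastforce
  have sub1: "DFCL N k i S \<subseteq> Inc N k"
  proof
    fix w assume "w \<in> DFCL N k i S"
    then show "w \<in> Inc N k"
    proof (rule m1[THEN disjE])
      assume "w \<in> S \<and> w \<notin> F" then show ?thesis using SI by blast
    next
      assume "\<exists>x. w = (A x, B p) \<and> (A x, B i) \<in> L"
      then obtain x where "w = (A x, B p)" "(A x, B i) \<in> L" by blast
      moreover have "p < N" unfolding p_def using iN by simp
      ultimately show ?thesis using nL unfolding Inc_iff by blast
    qed
  qed
  have sub2: "DLCF N k i S \<subseteq> Inc N k"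
  proof
    fix w assume "w \<in> DLCF N k i S"
    then show "w \<in> Inc N k"
    proof (rule m2[THEN disjE])
      assume "w \<in> S \<and> w \<notin> L" then show ?thesis using SI by blast
    next
      assume "\<exists>b. w = (A s, B b) \<and> (A i, B b) \<in> F"
      then obtain b where "w = (A s, B b)" "(A i, B b) \<in> F" by blast
      moreover have "s < N" unfolding s_def using iN by simp
      ultimately show ?thesis using nF unfolding Inc_iff by blast
    qed
  qed
  have C1: "\<And>a b x. (A a, B b) \<in> S \<Longrightarrow> (A a, B b) \<notin> F \<Longrightarrow> (A x, B i) \<in> L \<Longrightarrow>
      \<not> (k < cyc_dist N x b \<and> k < cyc_dist N a p)"
  proof
    fix a b x assume h: "(A a, B b) \<in> S" "(A a, B b) \<notin> F" "(A x, B i) \<in> L"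
      and c: "k < cyc_dist N x b \<and> k < cyc_dist N a p"
    have xS: "(A x, B i) \<in> S" using h(3) LS by blast
    have "cyc_dist N a i \<le> k" using ind[OF xS h(1)] c by auto
    moreover have "a < N" using inS[OF h(1)] by auto
    ultimately have "a = i" using F2[OF kN iN] c unfolding p_def by blast
    then show False using h xS c Fc by blast
  qed
  have C2: "\<And>a b b'. (A a, B b') \<in> S \<Longrightarrow> (A a, B b') \<notin> L \<Longrightarrow> (A i, B b) \<in> F \<Longrightarrow>
      \<not> (k < cyc_dist N s b' \<and> k < cyc_dist N a b)"
  proof
    fix a b b' assume h: "(A a, B b') \<in> S" "(A a, B b') \<notin> L" "(A i, B b) \<in> F"
      and c: "k < cyc_dist N s b' \<and> k < cyc_dist N a b"
    have bS: "(A i, B b) \<in> S" using h(3) FS by blast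
    have "cyc_dist N i b' \<le> k" using ind[OF bS h(1)] c by auto
    moreover have "b' < N" using inS[OF h(1)] by auto
    ultimately have "b' = i" using F5[OF kN iN] c unfolding s_def by blast
    then show False using h bS c Lc by blast
  qed
  have I1: "independent N k (DFCL N k i S)"
    unfolding indep_iff
  proof (intro conjI sub1 allI impI)
    fix a b x y assume h1: "(A a, B b) \<in> DFCL N k i S" and h2: "(A x, B y) \<in> DFCL N k i S"
    show "\<not> (k < cyc_dist N a y \<and> k < cyc_dist N x b)"
    proof -
      from m1[OF h1] show ?thesis
      proof
        assume o1: "(A a, B b) \<in> S \<and> (A a, B b) \<notin> F"
        from m1[OF h2] show ?thesis
        proof
          assume "(A x, B y) \<in> S \<and> (A x, B y) \<notin> F" then show ?thesis using ind o1 by blast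
        next
          assume "\<exists>x'. (A x, B y) = (A x', B p) \<and> (A x', B i) \<in> L"
          then have "y = p" "(A x, B i) \<in> L" by auto
          then show ?thesis using C1[of a b x] o1 by blast
        qed
      next
        assume "\<exists>x'. (A a, B b) = (A x', B p) \<and> (A x', B i) \<in> L"
        then have n1: "b = p" "(A a, B i) \<in> L" by auto
        from m1[OF h2] show ?thesis
        proof
          assume "(A x, B y) \<in> S \<and> (A x, B y) \<notin> F" then show ?thesis using C1[of x y a] n1 by blast
        next
          assume "\<exists>x'. (A x, B y) = (A x', B p) \<and> (A x', B i) \<in> L"
          then have "y = p" by auto
          then show ?thesis using nL[OF n1(2)] by simp
        qed
      qed
    qed
  qed
  have I2: "independent N k (DLCF N k i S)"
    unfolding indep_iff
  proof (intro conjI sub2 allI impI)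
    fix a b x y assume h1: "(A a, B b) \<in> DLCF N k i S" and h2: "(A x, B y) \<in> DLCF N k i S"
    show "\<not> (k < cyc_dist N a y \<and> k < cyc_dist N x b)"
    proof -
      from m2[OF h1] show ?thesis
      proof
        assume o1: "(A a, B b) \<in> S \<and> (A a, B b) \<notin> L"
        from m2[OF h2] show ?thesis
        proof
          assume "(A x, B y) \<in> S \<and> (A x, B y) \<notin> L" then show ?thesis using ind o1 by blast
        next
          assume "\<exists>b'. (A x, B y) = (A s, B b') \<and> (A i, B b') \<in> F"
          then have "x = s" "(A i, B y) \<in> F" by auto
          then show ?thesis using C2[of a b y] o1 by blast
        qed
      next
        assume "\<exists>b'. (A a, B b) = (A s, B b') \<and> (A i, B b') \<in> F"
        then have n1: "a = s" "(A i, B b) \<in> F" by auto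
        from m2[OF h2] show ?thesis
        proof
          assume "(A x, B y) \<in> S \<and> (A x, B y) \<notin> L" then show ?thesis using C2[of x y b] n1 by blast
        next
          assume "\<exists>b'. (A x, B y) = (A s, B b') \<and> (A i, B b') \<in> F"
          then have n2: "x = s" "(A i, B y) \<in> F" by auto
          then show ?thesis using nF[OF n2(2)] n1 by simp
        qed
      qed
    qed
  qed
  have finS: "finite S"
  proof (rule finite_subset[OF SI])
    have "Inc N k \<subseteq> (A ` {..<N}) \<times> (B ` {..<N})" unfolding Inc_def by auto
    then show "finite (Inc N k)" by (rule finite_subset) simp
  qed
  have finF: "finite F" and finL: "finite L" using FS LS finS finite_subset by blast+
  have inj1: "inj_on (\<lambda>v. (fst v, B p)) L" using Lc by (auto simp: inj_on_def)
  have inj2: "inj_on (\<lambda>u. (A s, snd u)) F" using Fc by (auto simp: inj_on_def)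
  have dis1: "(S - F) \<inter> (\<lambda>v. (fst v, B p)) ` L = {}"
  proof (rule ccontr)
    assume "(S - F) \<inter> (\<lambda>v. (fst v, B p)) ` L \<noteq> {}"
    then obtain v where v: "v \<in> L" "(fst v, B p) \<in> S" by blast
    then obtain x b where x: "v = (A x, B i)" "(A i, B b) \<in> S" "k < cyc_dist N x b" using Lc by blast
    have "k < cyc_dist N i p" using F3[OF kN iN] unfolding p_def .
    then show False using ind[OF x(2)] v(2) x by auto
  qed
  have dis2: "(S - L) \<inter> (\<lambda>u. (A s, snd u)) ` F = {}"
  proof (rule ccontr)
    assume "(S - L) \<inter> (\<lambda>u. (A s, snd u)) ` F \<noteq> {}"
    then obtain u where u: "u \<in> F" "(A s, snd u) \<in> S" by blast
    then obtain x b where x: "u = (A i, B b)" "(A x, B i) \<in> S" "k < cyc_dist N x b" using Fc by blast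
    have "k < cyc_dist N s i" using F6[OF kN iN] unfolding s_def .
    then show False using ind[OF x(2)] u(2) x by auto
  qed
  have c1: "card (DFCL N k i S) = card S - card F + card L"
    unfolding D1 using card_Un_disjoint[OF _ _ dis1] finS finL card_Diff_subset[OF finF FS]
      card_image[OF inj1] by simp
  have c2: "card (DLCF N k i S) = card S - card L + card F"
    unfolding D2 using card_Un_disjoint[OF _ _ dis2] finS finF card_Diff_subset[OF finL LS]
      card_image[OF inj2] by simp
  have "card F \<le> card S" "card L \<le> card S" using card_mono[OF finS FS] card_mono[OF finS LS] .
  then have "card (DFCL N k i S) + card (DLCF N k i S) = 2 * card S" using c1 c2 by simp
  then show ?thesis using sub1 sub2 I1 I2 unfolding N_def by blast
qed

end
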